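(* Let $\phi:\mathbb{R}^n\to\mathbb{R}\cup\{+\infty\}$ be proper, lsc and convex, and $\mu=\mu(\phi)$. Let $(x^-,\chi,\varepsilon)\in\mathrm{dom}\,\phi\times[0,1)\times\mathbb{R}_{++}$ and let $(x,y,\Gamma,\lambda)\in\mathrm{dom}\,\phi\times\mathrm{dom}\,\phi\times\{\text{proper lsc convex functions}\}\times\mathbb{R}_{++}$ satisfy $\Gamma\le\phi$, \[ \phi(y)+\frac{\chi}{2\lambda}\|y-x^-\|^2-\min_{u\in\mathbb{R}^n}\left\{\Gamma(u)+\frac1{2\lambda}\|u-x^-\|^2\right\}\le\varepsilon,\qquad x=\mathrm{argmin}_{u\in\mathbb{R}^n}\left\{\Gamma(u)+\frac1{2\lambda}\|u-x^-\|^2\right\}. \] Assume further that $\Gamma$ is $\nu$-convex for some $\nu\in[0,\mu]$. Then for every $u\in\mathbb{R}^n$, \[ 2\lambda[\phi(y)-\phi(u)]\le\frac{2\lambda\varepsilon}{1-\chi}+\|x^--u\|^2-(1+\sigma)\|x-u\|^2,\qquad \sigma:=\frac{\lambda[\nu(1+\mu\lambda)+\chi(\mu-\nu)]}{1+\mu\lambda+\chi\lambda(\nu-\mu)}. \]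
   Context: For a proper convex function $\psi$, $\mu(\psi)$ is the largest $\mu\ge0$ such that $\psi-\frac\mu2\|\cdot\|^2$ is convex. A function $\Gamma$ is $\nu$-convex if $\Gamma(\alpha a+(1-\alpha)b)\le\alpha\Gamma(a)+(1-\alpha)\Gamma(b)-\frac{\alpha(1-\alpha)\nu}{2}\|a-b\|^2$ for all $a,b\in\mathrm{dom}\,\Gamma$, $\alpha\in[0,1]$. *)

theory Defs
  imports "HOL-Analysis.Analysis"
begin

definition edom :: "('a \<Rightarrow> ereal) \<Rightarrow> 'a set" where
  "edom f = {x. f x < \<infinity>}"

definition proper_fun :: "('a \<Rightarrow> ereal) \<Rightarrow> bool" where
  "proper_fun f \<longleftrightarrow> (\<forall>x. f x \<noteq> -\<infinity>) \<and> (\<exists>x. f x \<noteq> \<infinity>)"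

definition lsc_fun :: "('a::topological_space \<Rightarrow> ereal) \<Rightarrow> bool" where
  "lsc_fun f \<longleftrightarrow> (\<forall>x. f x \<le> Liminf (at x) f)"

definition econvex :: "('a::real_vector \<Rightarrow> ereal) \<Rightarrow> bool" where
  "econvex f \<longleftrightarrow> convex (edom f) \<and> convex_on (edom f) (\<lambda>x. real_of_ereal (f x))"

text \<open>psi - (m/2) norm^2 is convex (the subtraction leaves +infinity values unchanged).\<close>
definition convex_minus_quad :: "('a::real_normed_vector \<Rightarrow> ereal) \<Rightarrow> real \<Rightarrow> bool" where
  "convex_minus_quad f m \<longleftrightarrow>
     econvex (\<lambda>x. f x - ereal (m / 2 * (norm x)\<^sup>2))"

definition is_mu :: "('a::real_normed_vector \<Rightarrow> ereal) \<Rightarrow> real \<Rightarrow> bool" where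
  "is_mu f mu \<longleftrightarrow> mu \<ge> 0 \<and> convex_minus_quad f mu \<and>
     (\<forall>m\<ge>0. convex_minus_quad f m \<longrightarrow> m \<le> mu)"

definition nu_convex :: "('a::real_normed_vector \<Rightarrow> ereal) \<Rightarrow> real \<Rightarrow> bool" where
  "nu_convex G nu \<longleftrightarrow>
     (\<forall>a\<in>edom G. \<forall>b\<in>edom G. \<forall>\<alpha>\<in>{0..1}.
        G (\<alpha> *\<^sub>R a + (1 - \<alpha>) *\<^sub>R b)
          \<le> ereal \<alpha> * G a + ereal (1 - \<alpha>) * G b
             - ereal (\<alpha> * (1 - \<alpha>) * nu / 2 * (norm (a - b))\<^sup>2))"

end

theory Submission
  imports Defs
begin


lemma norm_comb0:
  fixes a b :: "'a::real_inner"
  shows "(norm (t *\<^sub>R a + (1 - t) *\<^sub>R b))\<^sup>2 = t * (norm a)\<^sup>2 + (1 - t) * (norm b)\<^sup>2 - t * (1 - t) * (norm (a - b))\<^sup>2"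
proof -
  have 1: "(norm (t *\<^sub>R a + (1 - t) *\<^sub>R b))\<^sup>2 = t^2 * (a \<bullet> a) + 2 * t * (1 - t) * (a \<bullet> b) + (1 - t)^2 * (b \<bullet> b)"
    unfolding power2_norm_eq_inner
    by (simp add: inner_add_left inner_add_right inner_commute[of b a] power2_eq_square algebra_simps)
  have 2: "(norm (a - b))\<^sup>2 = (a \<bullet> a) - 2 * (a \<bullet> b) + (b \<bullet> b)"
    unfolding power2_norm_eq_inner
    by (simp add: inner_diff_left inner_diff_right inner_commute[of b a])
  show ?thesis unfolding 1 2 unfolding power2_norm_eq_inner by (simp add: power2_eq_square algebra_simps)
qed

lemma norm_comb:
  fixes a b c :: "'a::real_inner"
  shows "(norm (t *\<^sub>R a + (1 - t) *\<^sub>R b - c))\<^sup>2 = t * (norm (a - c))\<^sup>2 + (1 - t) * (norm (b - c))\<^sup>2 - t * (1 - t) * (norm (a - b))\<^sup>2"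
proof -
  have e: "t *\<^sub>R a + (1 - t) *\<^sub>R b - c = t *\<^sub>R (a - c) + (1 - t) *\<^sub>R (b - c)" by (simp add: algebra_simps)
  have e2: "a - b = (a - c) - (b - c)" by simp
  show ?thesis unfolding e by (subst e2, rule norm_comb0)
qed

lemma key_ineq:
  fixes p q :: "'a::real_inner" and chi lam mu nu :: real
  assumes "0 \<le> chi" "chi < 1" "0 < lam" "0 \<le> mu" "0 \<le> nu"
  shows "(1 - chi) * ((1 + lam * (nu * (1 + mu * lam) + chi * (mu - nu))
                     / (1 + mu * lam + chi * lam * (nu - mu))) * (1/lam)) * (norm p)\<^sup>2
    \<le> (1 - chi) * chi * (1/lam + mu) * (norm q)\<^sup>2 + (nu + 1/lam) * (norm (p + chi *\<^sub>R q))\<^sup>2"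
proof -
  define a where "a = 1/lam"
  define E where "E = (1 - chi) * (a + mu) + (nu + a) * chi"
  have a: "a > 0" using assms by (simp add: a_def)
  have E1: "(1 - chi) * (a + mu) > 0" using assms a by (intro mult_pos_pos) auto
  have E2: "(nu + a) * chi \<ge> 0" using assms a by (intro mult_nonneg_nonneg) auto
  have E: "E > 0" unfolding E_def using E1 E2 by linarith
  have D: "1 + mu * lam + chi * lam * (nu - mu) = lam * E"
    unfolding E_def a_def using assms by (simp add: field_simps)
  have s0: "lam * E + lam * (nu * (1 + mu * lam) + chi * (mu - nu)) = lam * lam * (nu + a) * (a + mu)"
    unfolding E_def a_def using assms by (simp add: field_simps)
  have s: "(1 + lam * (nu * (1 + mu * lam) + chi * (mu - nu))
                     / (1 + mu * lam + chi * lam * (nu - mu))) * (1/lam) = (nu + a) * (a + mu) / E"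
  proof -
    have "(1 + lam * (nu * (1 + mu * lam) + chi * (mu - nu)) / (lam * E))
        = (lam * E + lam * (nu * (1 + mu * lam) + chi * (mu - nu))) / (lam * E)"
      using assms E by (simp add: field_simps)
    also have "\<dots> = lam * (nu + a) * (a + mu) / E" unfolding s0 using assms E by simp
    finally show ?thesis unfolding D using assms by simp
  qed
  define P where "P = (norm p)\<^sup>2"
  define Q where "Q = (norm q)\<^sup>2"
  define R where "R = inner p q"
  have n1: "(norm (p + chi *\<^sub>R q))\<^sup>2 = P + 2 * chi * R + chi^2 * Q"
    unfolding P_def Q_def R_def power2_norm_eq_inner
    by (simp add: inner_add_left inner_add_right inner_commute[of q p] power2_eq_square algebra_simps)
  have n2: "(norm (E *\<^sub>R q + (nu + a) *\<^sub>R p))\<^sup>2 = E^2 * Q + 2 * E * (nu + a) * R + (nu + a)^2 * P"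
    unfolding P_def Q_def R_def power2_norm_eq_inner
    by (simp add: inner_add_left inner_add_right inner_commute[of q p] power2_eq_square algebra_simps)
  have id: "E * ((1 - chi) * chi * (a + mu) * Q + (nu + a) * (P + 2 * chi * R + chi^2 * Q)) - (1 - chi) * (nu + a) * (a + mu) * P
      = chi * (E^2 * Q + 2 * E * (nu + a) * R + (nu + a)^2 * P)"
    unfolding E_def by (simp add: power2_eq_square algebra_simps)
  have "0 \<le> chi * (E^2 * Q + 2 * E * (nu + a) * R + (nu + a)^2 * P)"
    using assms n2[symmetric] by simp
  hence "(1 - chi) * (nu + a) * (a + mu) * P \<le> E * ((1 - chi) * chi * (a + mu) * Q + (nu + a) * (P + 2 * chi * R + chi^2 * Q))"
    using id by linarith
  hence "(1 - chi) * ((nu + a) * (a + mu) / E) * P \<le> (1 - chi) * chi * (a + mu) * Q + (nu + a) * (P + 2 * chi * R + chi^2 * Q)"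
    using E by (simp add: field_simps)
  thus ?thesis unfolding s n1 P_def Q_def a_def .
qed

lemma ident:
  fixes al chi Py Pu eps k Nu S Pux Ny Gx Nx nu Dw Gw Nw Pw mu Q :: real
  assumes "al + chi = 1"
  shows "al * (Py - Pu) - (eps + al * k * Nu - al * S / 2 * Pux)
   = (Py + chi * k * Ny - (Gx + k * Nx) - eps) + (Gx + k * Nx + (nu + 2 * k) / 2 * Dw - (Gw + k * Nw))
   + (Gw - Pw) + (Pw - (al * Pu + chi * Py - al * chi * mu / 2 * Q))
   + k * (Nw - (al * Nu + chi * Ny - al * chi * Q))
   + 1 / 2 * (al * S * Pux - (al * chi * (2 * k + mu) * Q + (nu + 2 * k) * Dw))"
proof -
  have h: "al = 1 - chi" using assms by simp
  show ?thesis unfolding h by (simp add: field_simps)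
qed

lemma sum6_le:
  fixes L R t1 t2 t3 t4 t5 t6 :: real
  shows "L - R = t1 + t2 + t3 + t4 + t5 + t6 \<Longrightarrow> t1 \<le> 0 \<Longrightarrow> t2 \<le> 0 \<Longrightarrow> t3 \<le> 0
    \<Longrightarrow> t4 \<le> 0 \<Longrightarrow> t5 \<le> 0 \<Longrightarrow> t6 \<le> 0 \<Longrightarrow> L \<le> R"
  by linarith

theorem proposition3p1:
  fixes phi Gam :: "'a::euclidean_space \<Rightarrow> ereal"
    and xm x y :: 'a and chi eps lam mu nu :: real
  assumes phi_prop: "proper_fun phi" "lsc_fun phi" "econvex phi"
    and mu_def: "is_mu phi mu"
    and xm: "xm \<in> edom phi"
    and chi_rng: "0 \<le> chi" "chi < 1"
    and eps_pos: "0 < eps"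
    and xy: "x \<in> edom phi" "y \<in> edom phi"
    and Gam_prop: "proper_fun Gam" "lsc_fun Gam" "econvex Gam"
    and lam_pos: "0 < lam"
    and Gle: "\<And>u. Gam u \<le> phi u"
    and argmin: "\<And>u. Gam x + ereal (1 / (2 * lam) * (norm (x - xm))\<^sup>2)
                    \<le> Gam u + ereal (1 / (2 * lam) * (norm (u - xm))\<^sup>2)"
    and gap: "phi y + ereal (chi / (2 * lam) * (norm (y - xm))\<^sup>2)
               - (INF u. Gam u + ereal (1 / (2 * lam) * (norm (u - xm))\<^sup>2)) \<le> ereal eps"
    and nu_rng: "0 \<le> nu" "nu \<le> mu" "nu_convex Gam nu"
  shows "\<forall>u. ereal (2 * lam) * (phi y - phi u)
           \<le> ereal (2 * lam * eps / (1 - chi) + (norm (xm - u))\<^sup>2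
               - (1 + lam * (nu * (1 + mu * lam) + chi * (mu - nu))
                     / (1 + mu * lam + chi * lam * (nu - mu))) * (norm (x - u))\<^sup>2)"
proof (intro allI)
  fix u
  define Phi where "Phi = (\<lambda>v. real_of_ereal (phi v))"
  define G where "G = (\<lambda>v. real_of_ereal (Gam v))"
  have phi_fin: "phi v = ereal (Phi v)" if "v \<in> edom phi" for v
    using phi_prop(1) that unfolding proper_fun_def edom_def Phi_def
    by (cases "phi v") auto
  have G_fin: "Gam v = ereal (G v)" if "v \<in> edom Gam" for v
    using Gam_prop(1) that unfolding proper_fun_def edom_def G_def
    by (cases "Gam v") auto
  have dom_sub: "edom phi \<subseteq> edom Gam"
    unfolding edom_def using Gle le_less_trans by blast
  
  have cvx: "convex (edom phi)" using phi_prop(3) unfolding econvex_def by simp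
  have strong: "Phi (t *\<^sub>R v1 + (1 - t) *\<^sub>R v2) \<le> t * Phi v1 + (1 - t) * Phi v2 - t * (1 - t) * mu / 2 * (norm (v1 - v2))\<^sup>2"
    if v: "v1 \<in> edom phi" "v2 \<in> edom phi" and t: "0 \<le> t" "t \<le> 1" for v1 v2 t
  proof -
    have "convex_minus_quad phi mu" using mu_def unfolding is_mu_def by simp
    hence c: "econvex (\<lambda>x. phi x - ereal (mu / 2 * (norm x)\<^sup>2))" unfolding convex_minus_quad_def .
    have ed: "edom (\<lambda>x. phi x - ereal (mu / 2 * (norm x)\<^sup>2)) = edom phi"
      unfolding edom_def
    proof (intro Collect_cong)
      fix x show "(phi x - ereal (mu / 2 * (norm x)\<^sup>2) < \<infinity>) = (phi x < \<infinity>)"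
        by (cases "phi x") auto
    qed
    have co: "convex_on (edom phi) (\<lambda>x. real_of_ereal (phi x - ereal (mu / 2 * (norm x)\<^sup>2)))"
      using c unfolding econvex_def ed by simp
    have wv: "t *\<^sub>R v1 + (1 - t) *\<^sub>R v2 \<in> edom phi"
      using convexD[OF cvx v, of t "1 - t"] t by simp
    have "real_of_ereal (phi ((1 - (1 - t)) *\<^sub>R v1 + (1 - t) *\<^sub>R v2) - ereal (mu / 2 * (norm ((1 - (1 - t)) *\<^sub>R v1 + (1 - t) *\<^sub>R v2))\<^sup>2))
       \<le> (1 - (1 - t)) * real_of_ereal (phi v1 - ereal (mu / 2 * (norm v1)\<^sup>2)) + (1 - t) * real_of_ereal (phi v2 - ereal (mu / 2 * (norm v2)\<^sup>2))"
      using convex_onD[OF co, of "1 - t" v1 v2] v t by simp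
    hence h: "Phi (t *\<^sub>R v1 + (1 - t) *\<^sub>R v2) - mu / 2 * (norm (t *\<^sub>R v1 + (1 - t) *\<^sub>R v2))\<^sup>2
       \<le> t * (Phi v1 - mu / 2 * (norm v1)\<^sup>2) + (1 - t) * (Phi v2 - mu / 2 * (norm v2)\<^sup>2)"
      using phi_fin[OF wv] phi_fin[OF v(1)] phi_fin[OF v(2)] by simp
    have n: "(norm (t *\<^sub>R v1 + (1 - t) *\<^sub>R v2))\<^sup>2 = t * (norm v1)\<^sup>2 + (1 - t) * (norm v2)\<^sup>2 - t * (1 - t) * (norm (v1 - v2))\<^sup>2"
      by (rule norm_comb0)
    have e: "t * (Phi v1 - mu / 2 * (norm v1)\<^sup>2) + (1 - t) * (Phi v2 - mu / 2 * (norm v2)\<^sup>2) + mu / 2 * (norm (t *\<^sub>R v1 + (1 - t) *\<^sub>R v2))\<^sup>2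
      = t * Phi v1 + (1 - t) * Phi v2 - t * (1 - t) * mu / 2 * (norm (v1 - v2))\<^sup>2"
      unfolding n by (simp add: field_simps)
    show ?thesis using h e by linarith
  qed
  have xG: "x \<in> edom Gam" using xy dom_sub by auto
  have F1: "G x + 1 / (2 * lam) * (norm (x - xm))\<^sup>2 + (nu + 1 / lam) / 2 * (norm (w - x))\<^sup>2
       \<le> G w + 1 / (2 * lam) * (norm (w - xm))\<^sup>2" if w: "w \<in> edom Gam" for w
  proof -
    define Mw where "Mw = G w + 1 / (2 * lam) * (norm (w - xm))\<^sup>2"
    define Mx where "Mx = G x + 1 / (2 * lam) * (norm (x - xm))\<^sup>2"
    define c where "c = (nu + 1 / lam) / 2 * (norm (w - x))\<^sup>2"
    have step: "(1 - t) * c \<le> Mw - Mx" if t: "0 < t" "t \<le> 1" for t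
    proof -
      define z where "z = t *\<^sub>R w + (1 - t) *\<^sub>R x"
      have "Gam z \<le> ereal t * Gam w + ereal (1 - t) * Gam x
             - ereal (t * (1 - t) * nu / 2 * (norm (w - x))\<^sup>2)"
        using nu_rng(3) w xG t unfolding nu_convex_def z_def by auto
      also have "\<dots> = ereal (t * G w + (1 - t) * G x - t * (1 - t) * nu / 2 * (norm (w - x))\<^sup>2)"
        using G_fin[OF w] G_fin[OF xG] by simp
      finally have gz: "Gam z \<le> ereal (t * G w + (1 - t) * G x - t * (1 - t) * nu / 2 * (norm (w - x))\<^sup>2)" .
      hence zG: "z \<in> edom Gam" unfolding edom_def by (auto intro: le_less_trans)
      have h2: "G z \<le> t * G w + (1 - t) * G x - t * (1 - t) * nu / 2 * (norm (w - x))\<^sup>2"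
        using gz G_fin[OF zG] by simp
      have h1: "Mx \<le> G z + 1 / (2 * lam) * (norm (z - xm))\<^sup>2"
        using argmin[of z] G_fin[OF zG] G_fin[OF xG] unfolding Mx_def by simp
      have h3: "1 / (2 * lam) * (norm (z - xm))\<^sup>2 = 1 / (2 * lam) * (t * (norm (w - xm))\<^sup>2 + (1 - t) * (norm (x - xm))\<^sup>2 - t * (1 - t) * (norm (w - x))\<^sup>2)"
        unfolding z_def by (simp only: norm_comb)
      have e: "t * (Mw - Mx) - t * ((1 - t) * c) = (t * G w + (1 - t) * G x - t * (1 - t) * nu / 2 * (norm (w - x))\<^sup>2)
          + 1 / (2 * lam) * (t * (norm (w - xm))\<^sup>2 + (1 - t) * (norm (x - xm))\<^sup>2 - t * (1 - t) * (norm (w - x))\<^sup>2) - Mx"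
        unfolding Mw_def Mx_def c_def using lam_pos by (simp add: field_simps)
      have "t * ((1 - t) * c) \<le> t * (Mw - Mx)"
        using h1 h2 h3 e by linarith
      thus ?thesis using t by simp
    qed
    have c0: "c \<ge> 0" unfolding c_def using nu_rng lam_pos by simp
    have "c \<le> Mw - Mx"
    proof (rule ccontr)
      assume "\<not> c \<le> Mw - Mx"
      hence lt: "Mw - Mx < c" by simp
      have ge: "0 \<le> Mw - Mx" using step[of 1] by simp
      define t where "t = (c - (Mw - Mx)) / (2 * c)"
      have cp: "c > 0" using lt ge by simp
      have t0: "0 < t" "t \<le> 1" unfolding t_def using lt ge cp by (auto simp: field_simps)
      have "(1 - t) * c = (c + (Mw - Mx)) / 2" unfolding t_def using cp by (simp add: field_simps)
      thus False using step[OF t0] lt by simp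
    qed
    thus ?thesis unfolding c_def Mw_def Mx_def by linarith
  qed
  have inf: "(INF u. Gam u + ereal (1 / (2 * lam) * (norm (u - xm))\<^sup>2)) = Gam x + ereal (1 / (2 * lam) * (norm (x - xm))\<^sup>2)"
  proof (rule antisym)
    show "(INF u. Gam u + ereal (1 / (2 * lam) * (norm (u - xm))\<^sup>2)) \<le> Gam x + ereal (1 / (2 * lam) * (norm (x - xm))\<^sup>2)"
      by (rule INF_lower) simp
    show "Gam x + ereal (1 / (2 * lam) * (norm (x - xm))\<^sup>2) \<le> (INF u. Gam u + ereal (1 / (2 * lam) * (norm (u - xm))\<^sup>2))"
      by (rule INF_greatest) (rule argmin)
  qed
  have F2: "Phi y + chi / (2 * lam) * (norm (y - xm))\<^sup>2 - (G x + 1 / (2 * lam) * (norm (x - xm))\<^sup>2) \<le> eps"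
    using gap unfolding inf using phi_fin[OF xy(2)] G_fin[OF xG] by simp
  show "ereal (2 * lam) * (phi y - phi u)
           \<le> ereal (2 * lam * eps / (1 - chi) + (norm (xm - u))\<^sup>2
               - (1 + lam * (nu * (1 + mu * lam) + chi * (mu - nu))
                     / (1 + mu * lam + chi * lam * (nu - mu))) * (norm (x - u))\<^sup>2)"
  proof (cases "u \<in> edom phi")
    case False
    hence "phi u = \<infinity>" unfolding edom_def by simp
    thus ?thesis using phi_fin[OF xy(2)] lam_pos by simp
  next
    case True
    define al where "al = 1 - chi"
    define w where "w = al *\<^sub>R u + (1 - al) *\<^sub>R y"
    have al: "0 < al" "al \<le> 1" using chi_rng unfolding al_def by auto
    have wd: "w \<in> edom phi" unfolding w_def
      using convexD[OF cvx True xy(2), of al "1 - al"] al by simp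
    have wG: "w \<in> edom Gam" using wd dom_sub by auto
    have F3: "Phi w \<le> al * Phi u + (1 - al) * Phi y - al * (1 - al) * mu / 2 * (norm (u - y))\<^sup>2"
      unfolding w_def using strong[OF True xy(2)] al by simp
    have F4: "G w \<le> Phi w" using Gle[of w] G_fin[OF wG] phi_fin[OF wd] by simp
    note F1w = F1[OF wG]
    have N1: "(norm (w - xm))\<^sup>2 = al * (norm (u - xm))\<^sup>2 + (1 - al) * (norm (y - xm))\<^sup>2 - al * (1 - al) * (norm (u - y))\<^sup>2"
      unfolding w_def by (rule norm_comb)
    have N2: "w - x = (u - x) + chi *\<^sub>R (y - u)"
      unfolding w_def al_def by (simp add: algebra_simps)
    define S where "S = (1 + lam * (nu * (1 + mu * lam) + chi * (mu - nu))
                     / (1 + mu * lam + chi * lam * (nu - mu))) * (1/lam)"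
    have K: "al * S * (norm (u - x))\<^sup>2 \<le> al * chi * (1/lam + mu) * (norm (y - u))\<^sup>2 + (nu + 1/lam) * (norm (w - x))\<^sup>2"
      unfolding N2 S_def al_def
      using key_ineq[OF chi_rng lam_pos _ nu_rng(1), of mu "u - x" "y - u"] nu_rng by simp
    have G1: "al * (Phi y - Phi u) \<le> eps + al / (2 * lam) * (norm (u - xm))\<^sup>2 - al * S / 2 * (norm (u - x))\<^sup>2"
    proof -
      have nc: "norm (y - u) = norm (u - y)" by (rule norm_minus_commute)
      define k where "k = 1 / (2 * lam)"
      have r1: "1 / lam = 2 * k" "chi / (2 * lam) = chi * k" "1 / (2 * lam) = k" "al / (2 * lam) = al * k"
        unfolding k_def by auto
      have c1: "1 - al = chi" unfolding al_def by simp
      have ac: "al + chi = 1" unfolding al_def by simp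
      note H = F1w[unfolded r1] F2[unfolded r1] F3[unfolded c1] F4 K[unfolded r1 nc] N1[unfolded c1]
      have "al * (Phi y - Phi u) \<le> eps + al * k * (norm (u - xm))\<^sup>2 - al * S / 2 * (norm (u - x))\<^sup>2"
        apply (rule sum6_le[OF ident[OF ac, of "Phi y" "Phi u" eps k "(norm (u - xm))\<^sup>2" S "(norm (u - x))\<^sup>2"
            "(norm (y - xm))\<^sup>2" "G x" "(norm (x - xm))\<^sup>2" nu "(norm (w - x))\<^sup>2" "G w" "(norm (w - xm))\<^sup>2" "Phi w" mu "(norm (u - y))\<^sup>2"]])
        using H(2) apply linarith
        using H(1) apply linarith
        using H(4) apply linarith
        using H(3) apply linarith
        using H(6) apply simp
        using H(5) apply simp
        done
      thus ?thesis unfolding r1 .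
    qed
    have "al * (Phi y - Phi u) \<le> al * (eps / al + 1 / (2 * lam) * (norm (u - xm))\<^sup>2 - S / 2 * (norm (u - x))\<^sup>2)"
    proof -
      have eqA: "al * (eps / al + 1 / (2 * lam) * (norm (u - xm))\<^sup>2 - S / 2 * (norm (u - x))\<^sup>2)
          = eps + al / (2 * lam) * (norm (u - xm))\<^sup>2 - al * S / 2 * (norm (u - x))\<^sup>2"
        using al by (simp add: field_simps)
      show ?thesis using G1 eqA by linarith
    qed
    hence G2: "Phi y - Phi u \<le> eps / al + 1 / (2 * lam) * (norm (u - xm))\<^sup>2 - S / 2 * (norm (u - x))\<^sup>2"
      using al by (simp add: mult_le_cancel_left_pos)
    have G3: "2 * lam * (Phi y - Phi u) \<le> 2 * lam * (eps / al + 1 / (2 * lam) * (norm (u - xm))\<^sup>2 - S / 2 * (norm (u - x))\<^sup>2)"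
      using G2 lam_pos by (simp add: mult_le_cancel_left_pos)
    have lS: "lam * S = (1 + lam * (nu * (1 + mu * lam) + chi * (mu - nu))
                     / (1 + mu * lam + chi * lam * (nu - mu)))" unfolding S_def using lam_pos by simp
    have G4: "2 * lam * (eps / al + 1 / (2 * lam) * (norm (u - xm))\<^sup>2 - S / 2 * (norm (u - x))\<^sup>2)
       = 2 * lam * eps / (1 - chi) + (norm (xm - u))\<^sup>2 - (lam * S) * (norm (x - u))\<^sup>2"
      unfolding al_def using lam_pos chi_rng by (simp add: field_simps norm_minus_commute)
    have "ereal (2 * lam) * (phi y - phi u) = ereal (2 * lam * (Phi y - Phi u))"
      using phi_fin[OF xy(2)] phi_fin[OF True] by simp
    thus ?thesis using G3 unfolding G4 lS by simp
  qed
qed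

end
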